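(* Let $x_s<x_t$ be integers, let $C\ge 0$, and let $f:[x_s,x_t]\to\mathbb{R}$ be such that $([x_s,x_t],f)$ is an Ameso($C$) pair. Suppose there exist $x^0\in[x_s,x_t]$ and a positive integer $b$ with $[x^0,x^0+b]\subseteq[x_s,x_t]$ such that $f(x^0)=\min_{y\in[x_s,x^0+b]}f(y)$ and $f(x^0)+C\le \max_{y\in[x^0,x^0+b]}f(y)$. Then $f(x^0)=\min_{y\in[x_s,x_t]}f(y)$.
   Context: For integers $a\le b$, $[a,b]$ denotes the set of integers $\{a,a+1,\dots,b\}$ (similarly $(a,b]$ and $[a,b)$ denote integer sets). Floors and ceilings of vectors are taken componentwise. A set $D^n\subseteq\mathbb{Z}^n$ is an Ameso set if $\lceil(\vec x+\vec y)/2\rceil,\lfloor(\vec x+\vec y)/2\rfloor\in D^n$ for all $\vec x,\vec y\in D^n$. For $C\ge 0$, $(D^n,f)$ is an Ameso($C$) pair if $D^n$ is an Ameso set, $f:D^n\to\mathbb{R}$ is bounded below, and $f(\vec x)+f(\vec y)+C\ge f(\lceil(\vec x+\vec y)/2\rceil)+f(\lfloor(\vec x+\vec y)/2\rfloor)$ for all $\vec x,\vec y\in D^n$. *)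

theory Defs
  imports Complex_Main
begin

text \<open>One-dimensional instances (n = 1) of the paper's notions.
  Ceiling and floor of (x+y)/2 are taken of the real number (x+y)/2.\<close>

definition ameso_set :: "int set \<Rightarrow> bool" where
  "ameso_set D \<longleftrightarrow> (\<forall>x\<in>D. \<forall>y\<in>D.
      \<lceil>real_of_int (x + y) / 2\<rceil> \<in> D \<and> \<lfloor>real_of_int (x + y) / 2\<rfloor> \<in> D)"

definition ameso_pair :: "real \<Rightarrow> int set \<Rightarrow> (int \<Rightarrow> real) \<Rightarrow> bool" where
  "ameso_pair C D f \<longleftrightarrow> ameso_set D \<and> (\<exists>m. \<forall>x\<in>D. m \<le> f x) \<and>
     (\<forall>x\<in>D. \<forall>y\<in>D. f x + f y + C \<ge>
        f \<lceil>real_of_int (x + y) / 2\<rceil> + f \<lfloor>real_of_int (x + y) / 2\<rfloor>)"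

end

theory Submission
  imports Defs
begin

lemma mid_eq:
  fixes a b w :: int
  assumes "a + b = 2 * w"
  shows "\<lceil>real_of_int (a + b) / 2\<rceil> = w" "\<lfloor>real_of_int (a + b) / 2\<rfloor> = w"
proof -
  have "real_of_int (a + b) / 2 = real_of_int w"
    using assms by (metis of_int_mult of_int_numeral nonzero_mult_div_cancel_left zero_neq_numeral)
  then show "\<lceil>real_of_int (a + b) / 2\<rceil> = w" "\<lfloor>real_of_int (a + b) / 2\<rfloor> = w" by simp_all
qed

lemma key:
  fixes f :: "int \<Rightarrow> real" and C :: real
  assumes ineq: "\<And>a b. a \<in> {xs..xt} \<Longrightarrow> b \<in> {xs..xt} \<Longrightarrow>
      f \<lceil>real_of_int (a + b) / 2\<rceil> + f \<lfloor>real_of_int (a + b) / 2\<rfloor> \<le> f a + f b + C"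
    and x: "x \<in> {xs..xt}" and z: "z \<in> {xs..xt}" and fz: "f z < f x"
    and v: "x < v" "v < z" and C0: "C \<ge> 0"
  shows "f v < f x + C"
proof -
  have two: "2 * f w \<le> f a + f b + C" if "a \<in> {xs..xt}" "b \<in> {xs..xt}" "a + b = 2 * w" for a b w
    using ineq[OF that(1,2)] mid_eq[OF that(3)] by simp
  define S where "S = {x<..<z}"
  have finS: "finite S" and vS: "v \<in> S" using v by (auto simp: S_def)
  define W where "W = Max (f ` S)"
  have fvW: "f v \<le> W" unfolding W_def using finS vS by auto
  have "W \<in> f ` S" unfolding W_def using finS vS by (intro Max_in) auto
  define T where "T = {t \<in> S. f t = W}"
  have finT: "finite T" using finS by (simp add: T_def)
  have Tne: "T \<noteq> {}" using \<open>W \<in> f ` S\<close> by (auto simp: T_def)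
  define w where "w = Max T"
  have wT: "w \<in> T" unfolding w_def using finT Tne by (rule Max_in)
  have wS: "w \<in> S" and fw: "f w = W" using wT by (auto simp: T_def)
  have leW: "f t \<le> W" if "t \<in> S" for t unfolding W_def using finS that by auto
  have ltW: "f t < W" if "t \<in> S" "t > w" for t
  proof -
    have "t \<notin> T" using that finT by (metis Max_ge not_le w_def)
    then show ?thesis using leW[OF that(1)] that(1) by (auto simp: T_def)
  qed
  have wx: "x < w" "w < z" using wS by (auto simp: S_def)
  have Dw: "\<And>t. t \<in> S \<Longrightarrow> t \<in> {xs..xt}" using x z by (auto simp: S_def)
  have "W < f x + C"
  proof (cases "2 * w = x + z")
    case True
    have "2 * W \<le> f x + f z + C" using two[OF x z, of w] True fw by simp
    then show ?thesis using fz C0 by simp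
  next
    case False
    show ?thesis
    proof (cases "2 * w < x + z")
      case True
      define q where "q = 2 * w - x"
      have qS: "q \<in> S" "q > w" using True wx by (auto simp: S_def q_def)
      have "2 * W \<le> f x + f q + C" using two[OF x Dw[OF qS(1)]] fw by (simp add: q_def)
      then show ?thesis using ltW[OF qS] by simp
    next
      case False2: False
      define p where "p = 2 * w - z"
      have pS: "p \<in> S" using False False2 wx by (auto simp: S_def p_def)
      have "2 * W \<le> f p + f z + C" using two[OF Dw[OF pS] z] fw by (simp add: p_def)
      then show ?thesis using leW[OF pS] fz by simp
    qed
  qed
  then show ?thesis using fvW by simp
qed

theorem theorem1:
  fixes xs xt :: int and C :: real and f :: "int \<Rightarrow> real" and x0 :: int and b :: nat
  assumes "xs < xt"
    and "C \<ge> 0"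
    and "ameso_pair C {xs..xt} f"
    and "x0 \<in> {xs..xt}"
    and "b > 0"
    and "{x0..x0 + int b} \<subseteq> {xs..xt}"
    and "f x0 = Min (f ` {xs..x0 + int b})"
    and "f x0 + C \<le> Max (f ` {x0..x0 + int b})"
  shows "f x0 = Min (f ` {xs..xt})"
proof -
  have ineq: "\<And>a c. a \<in> {xs..xt} \<Longrightarrow> c \<in> {xs..xt} \<Longrightarrow>
      f \<lceil>real_of_int (a + c) / 2\<rceil> + f \<lfloor>real_of_int (a + c) / 2\<rfloor> \<le> f a + f c + C"
    using assms(3) unfolding ameso_pair_def by blast
  have all: "f x0 \<le> f y" if y: "y \<in> {xs..xt}" for y
  proof (rule ccontr)
    assume "\<not> f x0 \<le> f y"
    then have fy: "f y < f x0" by simp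
    show False
    proof (cases "y \<le> x0 + int b")
      case True
      have "Min (f ` {xs..x0 + int b}) \<le> f y" using True y by (intro Min_le) auto
      then show False using fy assms(7) by simp
    next
      case False
      have "Max (f ` {x0..x0 + int b}) \<in> f ` {x0..x0 + int b}" by (intro Max_in) auto
      then obtain w where w0: "w \<in> {x0..x0 + int b}" "f w = Max (f ` {x0..x0 + int b})" by (metis imageE)
      then have w: "w \<in> {x0..x0 + int b}" "f x0 + C \<le> f w" using assms(8) by auto
      obtain v where v: "x0 < v" "v < y" "f x0 + C \<le> f v"
      proof (cases "w = x0")
        case True
        then have "C = 0" using w assms(2) by simp
        have "Min (f ` {xs..x0 + int b}) \<le> f (x0 + 1)" using assms(4,5) by (intro Min_le) auto
        then have "f x0 + C \<le> f (x0 + 1)" using assms(7) \<open>C = 0\<close> by simp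
        then show ?thesis using that[of "x0 + 1"] False assms(5) by simp
      next
        case False
        then show ?thesis using that[of w] w \<open>\<not> y \<le> x0 + int b\<close> by auto
      qed
      have "f v < f x0 + C" using key[OF ineq assms(4) y fy v(1,2) assms(2)] by blast
      then show False using v(3) by simp
    qed
  qed
  show ?thesis
    by (rule sym, rule Min_eqI) (use all assms(4) in auto)
qed

end
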